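(* Let $f:\{-1,1\}^n\to\{-1,1\}$ be computable by a parity decision tree of depth $d$. Define $\sigma^2 = 4\Pr[f(x)=1]\Pr[f(x)=-1]$ (probabilities over uniformly random $x\in\{-1,1\}^n$) to be the variance of $f$. Then $$\sum_{i=1}^n \hat f(i) \le \sqrt{4\ln 2\,\sigma^2 d}.$$
   Context: Every $f:\{-1,1\}^n\to\{-1,1\}$ has a unique expansion $f(x)=\sum_{S\subseteq[n]}\hat f(S)\prod_{i\in S}x_i$, where $\hat f(S)=\mathbf{E}_x[f(x)\prod_{i\in S}x_i]$ over uniform $x$; $\hat f(i)$ denotes $\hat f(\{i\})$. A parity decision tree is a rooted full binary tree whose internal nodes are labelled by subsets $S\subseteq[n]$, whose two outgoing edges from each internal node are labelled $-1$ and $1$, and whose leaves are labelled by values in $\{-1,1\}$; an input $x$ follows from a node labelled $S$ the edge labelled $\prod_{i\in S}x_i$. The tree computes $f$ if every input $x$ reaches a leaf labelled $f(x)$. Its depth is the maximum number of internal nodes on a root-to-leaf path. *)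

theory Defs
  imports Complex_Main
begin

text \<open>Boolean cube {-1,1}^n, coordinates indexed by 0..n-1; points are functions
  nat => real which take values in {-1,1} on {0..<n} and are fixed to 1 outside.\<close>
definition cube :: "nat \<Rightarrow> (nat \<Rightarrow> real) set" where
  "cube n = {x. (\<forall>i<n. x i = -1 \<or> x i = 1) \<and> (\<forall>i\<ge>n. x i = 1)}"

definition cexp :: "nat \<Rightarrow> ((nat \<Rightarrow> real) \<Rightarrow> real) \<Rightarrow> real" where
  "cexp n g = (\<Sum>x\<in>cube n. g x) / real (card (cube n))"

definition cprob :: "nat \<Rightarrow> ((nat \<Rightarrow> real) \<Rightarrow> bool) \<Rightarrow> real" where
  "cprob n P = real (card {x\<in>cube n. P x}) / real (card (cube n))"

definition fourier :: "nat \<Rightarrow> ((nat \<Rightarrow> real) \<Rightarrow> real) \<Rightarrow> nat set \<Rightarrow> real" where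
  "fourier n f S = cexp n (\<lambda>x. f x * (\<Prod>i\<in>S. x i))"

datatype pdt = Leaf real | Node "nat set" pdt pdt

fun pdt_eval :: "pdt \<Rightarrow> (nat \<Rightarrow> real) \<Rightarrow> real" where
  "pdt_eval (Leaf b) x = b"
| "pdt_eval (Node S tn tp) x =
     (if (\<Prod>i\<in>S. x i) = -1 then pdt_eval tn x else pdt_eval tp x)"

fun pdt_depth :: "pdt \<Rightarrow> nat" where
  "pdt_depth (Leaf b) = 0"
| "pdt_depth (Node S tn tp) = Suc (max (pdt_depth tn) (pdt_depth tp))"

fun pdt_ok :: "nat \<Rightarrow> pdt \<Rightarrow> bool" where
  "pdt_ok n (Leaf b) = (b = -1 \<or> b = 1)"
| "pdt_ok n (Node S tn tp) = (S \<subseteq> {0..<n} \<and> pdt_ok n tn \<and> pdt_ok n tp)"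

definition pdt_computes :: "nat \<Rightarrow> pdt \<Rightarrow> ((nat \<Rightarrow> real) \<Rightarrow> real) \<Rightarrow> bool" where
  "pdt_computes n t f = (pdt_ok n t \<and> (\<forall>x\<in>cube n. pdt_eval t x = f x))"

end

theory Submission
  imports Defs
begin

lemma cube_0: "cube 0 = {\<lambda>_. 1}"
  by (auto simp: cube_def)

lemma cube_Suc: "cube (Suc n) = cube n \<union> (\<lambda>x. x(n := -1)) ` cube n"
proof (rule set_eqI, rule iffI)
  fix x assume x: "x \<in> cube (Suc n)"
  show "x \<in> cube n \<union> (\<lambda>x. x(n := -1)) ` cube n"
  proof (cases "x n = 1")
    case True
    have "x \<in> cube n" unfolding cube_def
    proof (intro CollectI conjI allI impI)
      fix i assume "i < n" thus "x i = -1 \<or> x i = 1" using x by (auto simp: cube_def)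
    next
      fix i assume "n \<le> i" thus "x i = 1" using x True
        by (cases "i = n") (auto simp: cube_def)
    qed
    thus ?thesis by blast
  next
    case False
    hence xn: "x n = -1" using x by (auto simp: cube_def)
    have "x(n := 1) \<in> cube n" unfolding cube_def
    proof (intro CollectI conjI allI impI)
      fix i assume "i < n" thus "(x(n:=1)) i = -1 \<or> (x(n:=1)) i = 1" using x by (auto simp: cube_def)
    next
      fix i assume "n \<le> i" thus "(x(n:=1)) i = 1" using x by (cases "i = n") (auto simp: cube_def)
    qed
    moreover have "x = (x(n:=1))(n := -1)" using xn by auto
    ultimately show ?thesis by blast
  qed
next
  fix x assume "x \<in> cube n \<union> (\<lambda>x. x(n := -1)) ` cube n"
  then consider "x \<in> cube n" | y where "y \<in> cube n" "x = y(n := -1)" by blast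
  thus "x \<in> cube (Suc n)"
  proof cases
    case 1
    show ?thesis unfolding cube_def
    proof (intro CollectI conjI allI impI)
      fix i assume "i < Suc n" thus "x i = -1 \<or> x i = 1"
        using 1 by (cases "i = n") (auto simp: cube_def)
    next
      fix i assume "Suc n \<le> i" thus "x i = 1" using 1 by (auto simp: cube_def)
    qed
  next
    case 2
    show ?thesis unfolding cube_def
    proof (intro CollectI conjI allI impI)
      fix i assume "i < Suc n" thus "x i = -1 \<or> x i = 1"
        using 2 by (cases "i = n") (auto simp: cube_def)
    next
      fix i assume "Suc n \<le> i" thus "x i = 1" using 2 by (auto simp: cube_def)
    qed
  qed
qed

lemma cube_val: "x \<in> cube n \<Longrightarrow> x i = 1 \<or> x i = -1"
  by (cases "i < n") (auto simp: cube_def)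

lemma cube_sq: "x \<in> cube n \<Longrightarrow> x i * x i = 1"
  using cube_val[of x n i] by auto

lemma cube_n: "x \<in> cube n \<Longrightarrow> x n = 1"
  by (auto simp: cube_def)

lemma finite_cube: "finite (cube n)"
  by (induction n) (auto simp: cube_0 cube_Suc)

lemma cube_disj: "cube n \<inter> (\<lambda>x. x(n := -1)) ` cube n = {}"
proof (rule equals0I)
  fix x assume "x \<in> cube n \<inter> (\<lambda>x. x(n := -1)) ` cube n"
  hence "x n = 1" "x n = -1" using cube_n[of x n] by auto
  thus False by simp
qed

lemma inj_dn: "inj_on (\<lambda>x. x(n := -1)) (cube n)"
proof (rule inj_onI)
  fix x y assume xy: "x \<in> cube n" "y \<in> cube n" "x(n := -1) = y(n := -1)"
  show "x = y"
  proof
    fix i show "x i = y i"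
    proof (cases "i = n")
      case True thus ?thesis using cube_n[OF xy(1)] cube_n[OF xy(2)] by simp
    next
      case False thus ?thesis using fun_cong[OF xy(3), of i] by simp
    qed
  qed
qed

lemma card_cube: "card (cube n) = 2 ^ n"
proof (induction n)
  case 0 thus ?case by (simp add: cube_0)
next
  case (Suc n)
  have "card (cube (Suc n)) = card (cube n) + card ((\<lambda>x. x(n := -1)) ` cube n)"
    unfolding cube_Suc by (rule card_Un_disjoint) (auto simp: finite_cube cube_disj)
  also have "card ((\<lambda>x. x(n := -1)) ` cube n) = card (cube n)"
    by (rule card_image[OF inj_dn])
  finally show ?case using Suc by simp
qed

lemma sum_cube_Suc: "(\<Sum>x\<in>cube (Suc n). g x) = (\<Sum>x\<in>cube n. g x) + (\<Sum>x\<in>cube n. g (x(n := -1)))"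
proof -
  have "(\<Sum>x\<in>cube (Suc n). g x) = (\<Sum>x\<in>cube n. g x) + (\<Sum>x\<in>(\<lambda>x. x(n := -1)) ` cube n. g x)"
    unfolding cube_Suc by (rule sum.union_disjoint) (auto simp: finite_cube cube_disj)
  also have "(\<Sum>x\<in>(\<lambda>x. x(n := -1)) ` cube n. g x) = (\<Sum>x\<in>cube n. g (x(n := -1)))"
    by (rule sum.reindex[OF inj_dn, unfolded comp_def])
  finally show ?thesis .
qed

definition L :: "nat \<Rightarrow> (nat \<Rightarrow> real) \<Rightarrow> real" where
  "L n x = (\<Sum>i<n. x i)"

lemma L_Suc: "L (Suc n) x = L n x + x n" by (simp add: L_def)
lemma L_upd: "L n (x(n := c)) = L n x" by (simp add: L_def)

lemma sum_L: "(\<Sum>x\<in>cube n. L n x) = 0 \<and> (\<Sum>x\<in>cube n. (L n x)^2) = real n * 2^n"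
proof (induction n)
  case 0 thus ?case by (simp add: cube_0 L_def)
next
  case (Suc n)
  have e1: "(\<Sum>x\<in>cube (Suc n). L (Suc n) x) = (\<Sum>x\<in>cube n. L n x + 1) + (\<Sum>x\<in>cube n. L n x - 1)"
    unfolding sum_cube_Suc by (intro arg_cong2[where f="(+)"] sum.cong) (auto simp: L_Suc L_upd cube_n)
  have e2: "(\<Sum>x\<in>cube (Suc n). (L (Suc n) x)^2) = (\<Sum>x\<in>cube n. (L n x + 1)^2) + (\<Sum>x\<in>cube n. (L n x - 1)^2)"
    unfolding sum_cube_Suc by (intro arg_cong2[where f="(+)"] sum.cong) (auto simp: L_Suc L_upd cube_n)
  have "(\<Sum>x\<in>cube n. (L n x + 1)^2) + (\<Sum>x\<in>cube n. (L n x - 1)^2)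
      = (\<Sum>x\<in>cube n. 2 * (L n x)^2 + 2)"
    by (simp add: sum.distrib[symmetric] power2_eq_square algebra_simps)
  also have "\<dots> = 2 * (\<Sum>x\<in>cube n. (L n x)^2) + 2 * 2^n"
    by (simp add: sum.distrib sum_distrib_left card_cube)
  finally have e3: "(\<Sum>x\<in>cube (Suc n). (L (Suc n) x)^2) = 2 * (\<Sum>x\<in>cube n. (L n x)^2) + 2 * 2^n"
    using e2 by simp
  have e4: "(\<Sum>x\<in>cube (Suc n). L (Suc n) x) = 2 * (\<Sum>x\<in>cube n. L n x)"
    using e1 by (simp add: sum.distrib sum_subtractf)
  show ?case using Suc e3 e4 by (simp add: algebra_simps)
qed

definition mul3 :: "(nat\<Rightarrow>real) \<Rightarrow> (nat\<Rightarrow>real) \<Rightarrow> (nat\<Rightarrow>real) \<Rightarrow> (nat\<Rightarrow>real)" where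
  "mul3 x y z = (\<lambda>i. x i * y i * z i)"

definition tcl :: "(nat\<Rightarrow>real) set \<Rightarrow> bool" where
  "tcl A = (\<forall>x\<in>A. \<forall>y\<in>A. \<forall>z\<in>A. mul3 x y z \<in> A)"

definition tmult :: "(nat\<Rightarrow>real) set \<Rightarrow> ((nat\<Rightarrow>real) \<Rightarrow> real) \<Rightarrow> bool" where
  "tmult A \<psi> = ((\<forall>x\<in>A. \<psi> x = -1 \<or> \<psi> x = 1) \<and>
     (\<forall>x\<in>A. \<forall>y\<in>A. \<forall>z\<in>A. \<psi> (mul3 x y z) = \<psi> x * \<psi> y * \<psi> z))"

definition vf :: "(nat\<Rightarrow>real) set \<Rightarrow> ((nat\<Rightarrow>real) \<Rightarrow> real) \<Rightarrow> real" where
  "vf A h = real (card A) * (\<Sum>x\<in>A. (h x)^2) - (\<Sum>x\<in>A. h x)^2"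

definition sl :: "((nat\<Rightarrow>real) \<Rightarrow> real) list \<Rightarrow> (nat\<Rightarrow>real) \<Rightarrow> real" where
  "sl ps x = sum_list (map (\<lambda>\<psi>. \<psi> x) ps)"

lemma sl_filter: "sl ps x = sl (filter P ps) x + sl (filter (\<lambda>y. \<not> P y) ps) x"
  by (induction ps) (auto simp: sl_def)

lemma sl_Cons: "sl (p # ps) x = p x + sl ps x" by (simp add: sl_def)

lemma sl_same: "(\<And>\<psi>. \<psi> \<in> set ps \<Longrightarrow> \<psi> y = \<psi> x) \<Longrightarrow> sl ps y = sl ps x"
  by (induction ps) (auto simp: sl_def)

lemma sl_neg: "(\<And>\<psi>. \<psi> \<in> set ps \<Longrightarrow> \<psi> y = - \<psi> x) \<Longrightarrow> sl ps y = - sl ps x"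
  by (induction ps) (auto simp: sl_def)

lemma sl_map: "sl (map (\<lambda>\<psi>. \<psi> \<circ> Q) ps) x = sl ps (Q x)"
  by (induction ps) (auto simp: sl_def)

lemma vf_reindex:
  assumes "inj_on P A" "\<And>x. x \<in> A \<Longrightarrow> h x = h0 (P x)"
  shows "vf A h = vf (P ` A) h0"
proof -
  have "(\<Sum>x\<in>P ` A. (h0 x)^2) = (\<Sum>x\<in>A. (h0 (P x))^2)"
    using sum.reindex[OF assms(1), of "\<lambda>x. (h0 x)^2"] by (simp only: comp_def)
  also have "\<dots> = (\<Sum>x\<in>A. (h x)^2)" by (rule sum.cong) (simp_all add: assms(2))
  finally have 1: "(\<Sum>x\<in>P ` A. (h0 x)^2) = (\<Sum>x\<in>A. (h x)^2)" .
  have "(\<Sum>x\<in>P ` A. h0 x) = (\<Sum>x\<in>A. h0 (P x))"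
    using sum.reindex[OF assms(1), of h0] by (simp only: comp_def)
  also have "\<dots> = (\<Sum>x\<in>A. h x)" by (rule sum.cong) (simp_all add: assms(2))
  finally have 2: "(\<Sum>x\<in>P ` A. h0 x) = (\<Sum>x\<in>A. h x)" .
  note 1 2
  moreover have "card (P ` A) = card A" by (rule card_image[OF assms(1)])
  ultimately show ?thesis by (simp add: vf_def)
qed

lemma tcl_cube: "tcl (cube n)"
  unfolding tcl_def mul3_def
proof (intro ballI)
  fix x y z assume a: "x \<in> cube n" "y \<in> cube n" "z \<in> cube n"
  show "(\<lambda>i. x i * y i * z i) \<in> cube n" unfolding cube_def
  proof (intro CollectI conjI allI impI)
    fix i assume "i < n"
    thus "x i * y i * z i = - 1 \<or> x i * y i * z i = 1"
      using cube_val[OF a(1), of i] cube_val[OF a(2), of i] cube_val[OF a(3), of i] by auto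
  next
    fix i assume "n \<le> i" thus "x i * y i * z i = 1" using a by (auto simp: cube_def)
  qed
qed

lemma mul3_in_cube: "x \<in> cube n \<Longrightarrow> y \<in> cube n \<Longrightarrow> z \<in> cube n \<Longrightarrow> mul3 x y z \<in> cube n"
  using tcl_cube unfolding tcl_def by blast

lemma case_c_eq:
  assumes "x \<in> A" "inj_on (\<lambda>x::nat\<Rightarrow>real. x(n:=1)) A"
  shows "L (Suc n) x + sl ps x = L n (x(n:=1)) + sl (((\<lambda>x. x n) \<circ> inv_into A (\<lambda>x. x(n:=1))) # map (\<lambda>\<psi>. \<psi> \<circ> inv_into A (\<lambda>x. x(n:=1))) ps) (x(n:=1))"
proof -
  have q: "inv_into A (\<lambda>x. x(n:=1)) (x(n:=1)) = x" by (rule inv_into_f_f[OF assms(2,1)])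
  show ?thesis unfolding sl_Cons sl_map by (simp add: L_Suc L_upd q)
qed

lemma leaf:
  "A \<subseteq> cube n \<Longrightarrow> A \<noteq> {} \<Longrightarrow> tcl A \<Longrightarrow> 2^n \<le> card A * 2^r \<Longrightarrow> \<forall>\<psi>\<in>set ps. tmult A \<psi> \<Longrightarrow>
   vf A (\<lambda>x. L n x + sl ps x) \<ge> real (card A)^2 * (real n - 2*real r - real (length ps))"
proof (induction n arbitrary: A r ps)
  case 0
  then have "A = {\<lambda>_. 1}" by (auto simp: cube_0)
  then show ?case by (simp add: vf_def)
next
  case (Suc n)
  note A = Suc.prems
  have finA: "finite A" using A(1) finite_cube finite_subset by blast
  define fl where "fl = (\<lambda>x::nat\<Rightarrow>real. x(n := - x n))"
  have flip_all: "\<forall>y\<in>A. fl y \<in> A" if "x \<in> A" "fl x \<in> A" for x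
  proof
    fix y assume y: "y \<in> A"
    have "fl y = mul3 y x (fl x)"
    proof
      fix i show "fl y i = mul3 y x (fl x) i"
        using cube_sq[of x "Suc n" i] that A(1) by (cases "i = n") (auto simp: fl_def mul3_def)
    qed
    thus "fl y \<in> A" using A(3) y that unfolding tcl_def by auto
  qed
  show ?case
  proof (cases "\<forall>y\<in>A. fl y \<in> A")
    case True
    define A0 where "A0 = {x\<in>A. x n = 1}"
    define dn where "dn = (\<lambda>x::nat\<Rightarrow>real. x(n := -1))"
    have A0sub: "A0 \<subseteq> cube n"
    proof
      fix x assume x: "x \<in> A0"
      hence xc: "x \<in> cube (Suc n)" "x n = 1" using A(1) by (auto simp: A0_def)
      show "x \<in> cube n" unfolding cube_def
      proof (intro CollectI conjI allI impI)
        fix i assume "i < n" thus "x i = -1 \<or> x i = 1" using xc by (auto simp: cube_def)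
      next
        fix i assume "n \<le> i" thus "x i = 1" using xc by (cases "i = n") (auto simp: cube_def)
      qed
    qed
    have dnA: "dn x \<in> A" if "x \<in> A0" for x
    proof -
      have "dn x = fl x" using that by (auto simp: A0_def dn_def fl_def)
      thus ?thesis using True that by (auto simp: A0_def)
    qed
    have Aeq: "A = A0 \<union> dn ` A0"
    proof
      show "A \<subseteq> A0 \<union> dn ` A0"
      proof
        fix x assume x: "x \<in> A"
        show "x \<in> A0 \<union> dn ` A0"
        proof (cases "x n = 1")
          case True thus ?thesis using x by (auto simp: A0_def)
        next
          case False
          hence xn: "x n = -1" using cube_val[of x "Suc n" n] A(1) x by auto
          have "fl x \<in> A0" using True x xn by (auto simp: A0_def fl_def)
          moreover have "x = dn (fl x)" using xn by (auto simp: dn_def fl_def)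
          ultimately show ?thesis by blast
        qed
      qed
      show "A0 \<union> dn ` A0 \<subseteq> A" using dnA by (auto simp: A0_def)
    qed
    have disj: "A0 \<inter> dn ` A0 = {}" by (auto simp: A0_def dn_def)
    have injdn: "inj_on dn A0"
      unfolding inj_on_def A0_def dn_def
      by (auto simp: fun_eq_iff) (metis fun_upd_apply)
    have finA0: "finite A0" using finA by (auto simp: A0_def)
    have sumA: "(\<Sum>x\<in>A. F x) = (\<Sum>x\<in>A0. F x) + (\<Sum>x\<in>A0. F (dn x))" for F :: "_ \<Rightarrow> real"
    proof -
      have "(\<Sum>x\<in>A. F x) = (\<Sum>x\<in>A0. F x) + (\<Sum>x\<in>dn ` A0. F x)"
        by (subst Aeq, rule sum.union_disjoint) (use finA0 disj in auto)
      also have "(\<Sum>x\<in>dn ` A0. F x) = (\<Sum>x\<in>A0. F (dn x))"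
        using sum.reindex[OF injdn] by (simp add: comp_def)
      finally show ?thesis .
    qed
    have cardA: "card A = 2 * card A0"
    proof -
      have "card A = card A0 + card (dn ` A0)"
        by (subst Aeq, rule card_Un_disjoint) (use finA0 disj in auto)
      thus ?thesis using card_image[OF injdn] by simp
    qed
    obtain x0 where x0: "x0 \<in> A0" using A(2) Aeq by blast
    have A0ne: "A0 \<noteq> {}" using x0 by blast
    have tclA0: "tcl A0" using A(3) unfolding tcl_def A0_def mul3_def by auto
    have codim: "2^n \<le> card A0 * 2^r" using A(4) cardA by simp
    define \<kappa> where "\<kappa> = (\<lambda>\<psi>::(nat\<Rightarrow>real)\<Rightarrow>real. \<psi> x0 * \<psi> (dn x0))"
    have kap: "\<psi> (dn x) = \<kappa> \<psi> * \<psi> x" if "\<psi> \<in> set ps" "x \<in> A0" for \<psi> x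
    proof -
      have "dn x = mul3 (dn x0) x0 x"
      proof
        fix i show "dn x i = mul3 (dn x0) x0 x i"
          using cube_sq[of x0 "Suc n" i] x0 A(1) that(2)
          by (cases "i = n") (auto simp: dn_def mul3_def A0_def)
      qed
      moreover have "dn x0 \<in> A" "x0 \<in> A" "x \<in> A" using dnA x0 that(2) by (auto simp: A0_def)
      ultimately show ?thesis using A(5) that(1) unfolding tmult_def \<kappa>_def by auto
    qed
    have kapv: "\<kappa> \<psi> = 1 \<or> \<kappa> \<psi> = -1" if "\<psi> \<in> set ps" for \<psi>
    proof -
      have "dn x0 \<in> A" "x0 \<in> A" using dnA x0 by (auto simp: A0_def)
      hence "\<psi> x0 = 1 \<or> \<psi> x0 = -1" "\<psi> (dn x0) = 1 \<or> \<psi> (dn x0) = -1"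
        using A(5) that unfolding tmult_def by auto
      thus ?thesis unfolding \<kappa>_def by auto
    qed
    define ps1 where "ps1 = filter (\<lambda>\<psi>. \<kappa> \<psi> = 1) ps"
    define ps2 where "ps2 = filter (\<lambda>\<psi>. \<not> \<kappa> \<psi> = 1) ps"
    define h1 where "h1 = (\<lambda>x. L n x + sl ps1 x)"
    define g where "g = (\<lambda>x. 1 + sl ps2 x)"
    have hup: "L (Suc n) x + sl ps x = h1 x + g x" if "x \<in> A0" for x
      using that sl_filter[of ps x "\<lambda>\<psi>. \<kappa> \<psi> = 1"]
      by (simp add: L_Suc A0_def h1_def g_def ps1_def ps2_def)
    have hdn: "L (Suc n) (dn x) + sl ps (dn x) = h1 x - g x" if "x \<in> A0" for x
    proof -
      have "sl ps1 (dn x) = sl ps1 x"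
      proof (rule sl_same)
        fix \<psi> assume "\<psi> \<in> set ps1"
        hence "\<psi> \<in> set ps" "\<kappa> \<psi> = 1" by (auto simp: ps1_def)
        thus "\<psi> (dn x) = \<psi> x" using kap[of \<psi> x] that by simp
      qed
      moreover have "sl ps2 (dn x) = - sl ps2 x"
      proof (rule sl_neg)
        fix \<psi> assume "\<psi> \<in> set ps2"
        hence "\<psi> \<in> set ps" "\<kappa> \<psi> \<noteq> 1" by (auto simp: ps2_def)
        hence "\<psi> \<in> set ps" "\<kappa> \<psi> = -1" using kapv by auto
        thus "\<psi> (dn x) = - \<psi> x" using kap[of \<psi> x] that by simp
      qed
      moreover have "L (Suc n) (dn x) = L n x - 1" by (simp add: L_Suc dn_def L_upd)
      ultimately show ?thesis using sl_filter[of ps "dn x" "\<lambda>\<psi>. \<kappa> \<psi> = 1"]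
        by (simp add: h1_def g_def ps1_def ps2_def)
    qed
    have vfeq: "vf A (\<lambda>x. L (Suc n) x + sl ps x) = 4 * vf A0 h1 + 4 * real (card A0) * (\<Sum>x\<in>A0. (g x)^2)"
    proof -
      have s2: "(\<Sum>x\<in>A. (L (Suc n) x + sl ps x)^2) = 2 * (\<Sum>x\<in>A0. (h1 x)^2) + 2 * (\<Sum>x\<in>A0. (g x)^2)"
      proof -
        have "(\<Sum>x\<in>A. (L (Suc n) x + sl ps x)^2) = (\<Sum>x\<in>A0. (h1 x + g x)^2) + (\<Sum>x\<in>A0. (h1 x - g x)^2)"
          by (simp add: sumA hup hdn)
        also have "\<dots> = (\<Sum>x\<in>A0. 2 * (h1 x)^2 + 2 * (g x)^2)"
          by (simp add: sum.distrib[symmetric] power2_eq_square algebra_simps)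
        finally show ?thesis by (simp add: sum.distrib sum_distrib_left)
      qed
      have s1: "(\<Sum>x\<in>A. L (Suc n) x + sl ps x) = 2 * (\<Sum>x\<in>A0. h1 x)"
      proof -
        have "(\<Sum>x\<in>A. L (Suc n) x + sl ps x) = (\<Sum>x\<in>A0. h1 x + g x) + (\<Sum>x\<in>A0. h1 x - g x)"
          by (simp add: sumA hup hdn)
        thus ?thesis by (simp add: sum.distrib sum_subtractf)
      qed
      show ?thesis unfolding vf_def s1 s2 cardA by (simp add: power2_eq_square algebra_simps)
    qed
    have IH: "vf A0 h1 \<ge> real (card A0)^2 * (real n - 2*real r - real (length ps1))"
      unfolding h1_def
      by (rule Suc.IH[OF A0sub A0ne tclA0 codim]) (use A(5) in \<open>auto simp: ps1_def tmult_def A0_def\<close>)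
    have len: "length ps1 + length ps2 = length ps"
      unfolding ps1_def ps2_def by (rule sum_length_filter_compl)
    have gsq: "(\<Sum>x\<in>A0. (g x)^2) \<ge> 0" by (intro sum_nonneg) auto
    show ?thesis
    proof (cases "ps2 = []")
      case True
      hence "(\<Sum>x\<in>A0. (g x)^2) = real (card A0)" by (simp add: g_def sl_def)
      moreover have "length ps1 = length ps" using len True by simp
      ultimately show ?thesis using IH unfolding vfeq cardA
        by (simp add: power2_eq_square algebra_simps)
    next
      case False
      hence "length ps1 + 1 \<le> length ps" using len by (cases ps2) auto
      hence "real n - 2*real r - real (length ps1) \<ge> real (Suc n) - 2 * real r - real (length ps)"
        by simp
      hence "real (card A0)^2 * (real n - 2*real r - real (length ps1))
          \<ge> real (card A0)^2 * (real (Suc n) - 2 * real r - real (length ps))"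
        by (intro mult_left_mono) auto
      moreover have "4 * real (card A0) * (\<Sum>x\<in>A0. (g x)^2) \<ge> 0" using gsq by simp
      ultimately show ?thesis using IH unfolding vfeq cardA
        by (simp add: power2_eq_square algebra_simps)
    qed
  next
    case False
    hence noflip: "\<forall>y\<in>A. fl y \<notin> A" using flip_all by blast
    define P where "P = (\<lambda>x::nat\<Rightarrow>real. x(n := 1))"
    have injP: "inj_on P A"
    proof (rule inj_onI)
      fix x y assume xy: "x \<in> A" "y \<in> A" "P x = P y"
      show "x = y"
      proof (cases "x n = y n")
        case True thus ?thesis using xy(3) by (auto simp: P_def fun_eq_iff) (metis fun_upd_other)
      next
        case False
        moreover have "x \<in> cube (Suc n)" "y \<in> cube (Suc n)" using A(1) xy by auto
        ultimately have "y n = - x n" using cube_val[of x "Suc n" n] cube_val[of y "Suc n" n] by auto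
        hence "y = fl x" using xy(3) by (auto simp: P_def fl_def fun_eq_iff) (metis fun_upd_other)
        thus ?thesis using noflip xy by auto
      qed
    qed
    define A0 where "A0 = P ` A"
    have A0sub: "A0 \<subseteq> cube n"
    proof
      fix x' assume "x' \<in> A0"
      then obtain x where x: "x \<in> A" "x' = P x" by (auto simp: A0_def)
      hence xc: "x \<in> cube (Suc n)" using A(1) by auto
      show "x' \<in> cube n" unfolding cube_def
      proof (intro CollectI conjI allI impI)
        fix i assume "i < n" thus "x' i = -1 \<or> x' i = 1" using xc x by (auto simp: cube_def P_def)
      next
        fix i assume "n \<le> i" thus "x' i = 1" using xc x by (cases "i = n") (auto simp: cube_def P_def)
      qed
    qed
    have cardA0: "card A0 = card A" unfolding A0_def using card_image[OF injP] .
    have A0ne: "A0 \<noteq> {}" using A(2) by (simp add: A0_def)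
    define Q where "Q = inv_into A P"
    have QP: "Q (P x) = x" if "x \<in> A" for x using that injP by (simp add: Q_def)
    have QA: "Q x' \<in> A" "P (Q x') = x'" if "x' \<in> A0" for x'
      using that by (auto simp: Q_def A0_def inv_into_into f_inv_into_f)
    have Pmul: "P (mul3 x y z) = mul3 (P x) (P y) (P z)" for x y z
      by (auto simp: P_def mul3_def fun_eq_iff)
    have tclA0: "tcl A0" using A(3) unfolding tcl_def A0_def by (auto simp: Pmul[symmetric])
    have Qmul: "Q (mul3 x y z) = mul3 (Q x) (Q y) (Q z)" if "x \<in> A0" "y \<in> A0" "z \<in> A0" for x y z
    proof -
      have "mul3 (Q x) (Q y) (Q z) \<in> A" using A(3) QA that unfolding tcl_def by auto
      moreover have "P (mul3 (Q x) (Q y) (Q z)) = mul3 x y z" using QA that by (simp add: Pmul)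
      ultimately show ?thesis using QP by metis
    qed
    have tmQ: "tmult A0 (\<psi> \<circ> Q)" if "tmult A \<psi>" for \<psi>
      using that QA Qmul unfolding tmult_def by auto
    have tmn: "tmult A (\<lambda>x. x n)"
      unfolding tmult_def using cube_val[of _ "Suc n" n] A(1) by (auto simp: mul3_def)
    define ps' where "ps' = ((\<lambda>x. x n) \<circ> Q) # map (\<lambda>\<psi>. \<psi> \<circ> Q) ps"
    have tm': "\<forall>\<psi>\<in>set ps'. tmult A0 \<psi>" using tmQ tmn A(5) by (auto simp: ps'_def)
    have cardle: "card A \<le> 2^n"
      using card_mono[OF finite_cube A0sub] cardA0 card_cube by simp
    have "r \<noteq> 0"
    proof
      assume "r = 0"
      hence "2 * 2^n \<le> card A" using A(4) by simp
      moreover have "(2::nat)^n > 0" by simp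
      ultimately show False using cardle by linarith
    qed
    then obtain r' where r': "r = Suc r'" by (cases r) auto
    have codim: "2^n \<le> card A0 * 2^r'" using A(4) cardA0 r' by simp
    have IH: "vf A0 (\<lambda>x. L n x + sl ps' x) \<ge> real (card A0)^2 * (real n - 2*real r' - real (length ps'))"
      by (rule Suc.IH[OF A0sub A0ne tclA0 codim tm'])
    have VF: "vf A (\<lambda>x. L (Suc n) x + sl ps x) = vf A0 (\<lambda>x. L n x + sl ps' x)"
      unfolding A0_def
    proof (rule vf_reindex[OF injP])
      fix x assume "x \<in> A"
      thus "L (Suc n) x + sl ps x = L n (P x) + sl ps' (P x)"
        unfolding ps'_def Q_def P_def by (rule case_c_eq[OF _ injP[unfolded P_def]])
    qed
    have l1: "length ps' = Suc (length ps)" unfolding ps'_def by (rule length_Cons[of _ "map (\<lambda>\<psi>. \<psi> \<circ> Q) ps", unfolded length_map])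
    have E: "real n - 2 * real r' - real (length ps') = real (Suc n) - 2*real r - real (length ps)"
      unfolding l1 r' of_nat_Suc by (simp add: algebra_simps)
    have G: "real (card A0)^2 * (real n - 2*real r' - real (length ps')) = real (card A)^2 * (real (Suc n) - 2*real r - real (length ps))"
      unfolding E cardA0 by (rule refl)
    show ?thesis using IH unfolding G VF .
  qed
qed

lemma chi_val: "x \<in> cube n \<Longrightarrow> (\<Prod>i\<in>S. x i) = 1 \<or> (\<Prod>i\<in>S. x i) = -1"
proof (cases "finite S")
  case True
  assume x: "x \<in> cube n"
  from True show ?thesis
  proof (induction S rule: finite_induct)
    case empty thus ?case by simp
  next
    case (insert a F)
    thus ?case using cube_val[OF x, of a] by auto
  qed
qed simp

lemma chi_mul3: "(\<Prod>i\<in>S. mul3 x y z i) = (\<Prod>i\<in>S. x i) * (\<Prod>i\<in>S. y i) * (\<Prod>i\<in>S. z i)"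
  by (simp add: mul3_def prod.distrib)

fun V :: "nat \<Rightarrow> pdt \<Rightarrow> (nat\<Rightarrow>real) set \<Rightarrow> real" where
  "V n (Leaf b) A = (\<Sum>x\<in>A. L n x)^2 / real (card A)"
| "V n (Node S tn tp) A = V n tn {x\<in>A. (\<Prod>i\<in>S. x i) = -1} + V n tp {x\<in>A. (\<Prod>i\<in>S. x i) \<noteq> -1}"

lemma V_nonneg: "V n t A \<ge> 0"
  by (induction t arbitrary: A) auto

lemma sum_split: "finite A \<Longrightarrow> sum F A = sum F {x\<in>A. P x} + sum F {x\<in>A. \<not> P x}"
proof -
  assume fA: "finite A"
  have "A = {x\<in>A. P x} \<union> {x\<in>A. \<not> P x}" by auto
  hence "sum F A = sum F ({x\<in>A. P x} \<union> {x\<in>A. \<not> P x})" by simp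
  also have "\<dots> = sum F {x\<in>A. P x} + sum F {x\<in>A. \<not> P x}"
    by (rule sum.union_disjoint) (use fA in auto)
  finally show ?thesis .
qed

lemma card_split: "finite A \<Longrightarrow> card A = card {x\<in>A. P x} + card {x\<in>A. \<not> P x}"
proof -
  assume fA: "finite A"
  have "A = {x\<in>A. P x} \<union> {x\<in>A. \<not> P x}" by auto
  hence "card A = card ({x\<in>A. P x} \<union> {x\<in>A. \<not> P x})" by simp
  also have "\<dots> = card {x\<in>A. P x} + card {x\<in>A. \<not> P x}"
    by (rule card_Un_disjoint) (use fA in auto)
  finally show ?thesis .
qed

lemma cs2:
  fixes a1 a2 P1 P2 V1 V2 :: real
  assumes "a1^2 \<le> P1*V1" "a2^2 \<le> P2*V2" "P1 \<ge> 0" "P2 \<ge> 0" "V1 \<ge> 0" "V2 \<ge> 0"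
  shows "(a1+a2)^2 \<le> (P1+P2)*(V1+V2)"
proof -
  have "(a1*a2)^2 \<le> (P1*V1)*(P2*V2)"
    unfolding power_mult_distrib by (rule mult_mono) (use assms in auto)
  also have "\<dots> \<le> ((P1*V2 + P2*V1)/2)^2"
  proof -
    have "((P1*V2 + P2*V1)/2)^2 - (P1*V1)*(P2*V2) = ((P1*V2 - P2*V1)/2)^2"
      by (simp add: power2_eq_square algebra_simps)
    moreover have "((P1*V2 - P2*V1)/2)^2 \<ge> 0" by simp
    ultimately show ?thesis by linarith
  qed
  finally have "(a1*a2)^2 \<le> ((P1*V2 + P2*V1)/2)^2" .
  hence "\<bar>a1*a2\<bar> \<le> \<bar>(P1*V2 + P2*V1)/2\<bar>" using abs_le_square_iff by blast
  hence "a1*a2 \<le> (P1*V2 + P2*V1)/2" using assms by auto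
  thus ?thesis using assms by (simp add: power2_eq_square algebra_simps)
qed

lemma V_cs: "finite A \<Longrightarrow>
  (\<Sum>x\<in>A. (pdt_eval t x - \<mu>) * L n x)^2 \<le> (\<Sum>x\<in>A. (pdt_eval t x - \<mu>)^2) * V n t A"
proof (induction t arbitrary: A)
  case (Leaf b)
  show ?case
  proof (cases "A = {}")
    case True thus ?thesis by simp
  next
    case False
    hence c: "real (card A) > 0" using Leaf by auto
    have "(\<Sum>x\<in>A. (pdt_eval (Leaf b) x - \<mu>) * L n x)^2 = (b - \<mu>)^2 * (\<Sum>x\<in>A. L n x)^2"
      by (simp add: sum_distrib_left[symmetric] power_mult_distrib)
    also have "\<dots> = (real (card A) * (b - \<mu>)^2) * ((\<Sum>x\<in>A. L n x)^2 / real (card A))"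
      using c by (simp add: field_simps)
    finally show ?thesis by simp
  qed
next
  case (Node S tn tp)
  let ?P = "\<lambda>x. (\<Prod>i\<in>S. x i) = -1"
  let ?A1 = "{x\<in>A. ?P x}" and ?A2 = "{x\<in>A. \<not> ?P x}"
  have f1: "finite ?A1" "finite ?A2" using Node.prems by auto
  have e1: "(\<Sum>x\<in>A. (pdt_eval (Node S tn tp) x - \<mu>) * L n x)
     = (\<Sum>x\<in>?A1. (pdt_eval tn x - \<mu>) * L n x) + (\<Sum>x\<in>?A2. (pdt_eval tp x - \<mu>) * L n x)"
    by (subst sum_split[OF Node.prems, of _ ?P]) (auto intro!: arg_cong2[where f="(+)"] sum.cong)
  have e2: "(\<Sum>x\<in>A. (pdt_eval (Node S tn tp) x - \<mu>)^2)
     = (\<Sum>x\<in>?A1. (pdt_eval tn x - \<mu>)^2) + (\<Sum>x\<in>?A2. (pdt_eval tp x - \<mu>)^2)"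
    by (subst sum_split[OF Node.prems, of _ ?P]) (auto intro!: arg_cong2[where f="(+)"] sum.cong)
  show ?case unfolding e1 e2 V.simps
    by (rule cs2[OF Node.IH(1)[OF f1(1)] Node.IH(2)[OF f1(2)]])
       (auto intro: sum_nonneg V_nonneg)
qed

lemma half_card:
  assumes A: "A \<subseteq> cube n" "tcl A" and c: "c = 1 \<or> c = -1" "c' = 1 \<or> c' = -1"
    and ne: "{x\<in>A. (\<Prod>i\<in>S. x i) = c'} \<noteq> {}"
  shows "card {x\<in>A. (\<Prod>i\<in>S. x i) = c} \<le> card {x\<in>A. (\<Prod>i\<in>S. x i) = c'}"
proof (cases "{x\<in>A. (\<Prod>i\<in>S. x i) = c} = {}")
  case True show ?thesis unfolding True by simp
next
  case False
  obtain a where a: "a \<in> A" "(\<Prod>i\<in>S. a i) = c" using False by auto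
  obtain b where b: "b \<in> A" "(\<Prod>i\<in>S. b i) = c'" using ne by auto
  have fin: "finite A" using A finite_cube finite_subset by blast
  show ?thesis
  proof (rule card_inj_on_le[where f="\<lambda>y. mul3 y a b"])
    show "inj_on (\<lambda>y. mul3 y a b) {x\<in>A. (\<Prod>i\<in>S. x i) = c}"
    proof (rule inj_onI)
      fix x y assume xy: "x \<in> {x\<in>A. (\<Prod>i\<in>S. x i) = c}" "y \<in> {x\<in>A. (\<Prod>i\<in>S. x i) = c}"
        "mul3 x a b = mul3 y a b"
      show "x = y"
      proof
        fix i
        have "x i * a i * b i = y i * a i * b i" using xy(3) by (simp add: mul3_def fun_eq_iff)
        moreover have "a i \<noteq> 0" "b i \<noteq> 0" using cube_val[of a n i] cube_val[of b n i] a b A by auto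
        ultimately show "x i = y i" by simp
      qed
    qed
    show "(\<lambda>y. mul3 y a b) ` {x\<in>A. (\<Prod>i\<in>S. x i) = c} \<subseteq> {x\<in>A. (\<Prod>i\<in>S. x i) = c'}"
    proof
      fix z assume "z \<in> (\<lambda>y. mul3 y a b) ` {x\<in>A. (\<Prod>i\<in>S. x i) = c}"
      then obtain y where y: "y \<in> A" "(\<Prod>i\<in>S. y i) = c" "z = mul3 y a b" by auto
      have "z \<in> A" using A(2) y a b unfolding tcl_def by auto
      moreover have "(\<Prod>i\<in>S. z i) = c'" using y a b c by (auto simp: chi_mul3)
      ultimately show "z \<in> {x\<in>A. (\<Prod>i\<in>S. x i) = c'}" by auto
    qed
    show "finite {x\<in>A. (\<Prod>i\<in>S. x i) = c'}" using fin by auto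
  qed
qed

lemma V_bound:
  "A \<subseteq> cube n \<Longrightarrow> tcl A \<Longrightarrow> (A = {} \<or> 2^n \<le> card A * 2^r) \<Longrightarrow>
   V n t A \<le> (\<Sum>x\<in>A. (L n x)^2) - real (card A) * (real n - 2 * (real r + real (pdt_depth t)))"
proof (induction t arbitrary: A r)
  case (Leaf b)
  show ?case
  proof (cases "A = {}")
    case True thus ?thesis by simp
  next
    case False
    hence cA: "2^n \<le> card A * 2^r" using Leaf by auto
    have fin: "finite A" using Leaf finite_cube finite_subset by blast
    hence c: "real (card A) > 0" using False by auto
    have "vf A (\<lambda>x. L n x + sl [] x) \<ge> real (card A)^2 * (real n - 2*real r - real (length ([]::((nat\<Rightarrow>real) \<Rightarrow> real) list)))"
      by (rule leaf) (use Leaf False cA in auto)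
    hence "(\<Sum>x\<in>A. L n x)^2 \<le> real (card A) * ((\<Sum>x\<in>A. (L n x)^2) - real (card A) * (real n - 2 * real r))"
      by (simp add: vf_def sl_def power2_eq_square algebra_simps)
    thus ?thesis using c by (simp add: pos_divide_le_eq mult.commute)
  qed
next
  case (Node S tn tp)
  let ?P = "\<lambda>x. (\<Prod>i\<in>S. x i) = -1"
  let ?A1 = "{x\<in>A. ?P x}" and ?A2 = "{x\<in>A. \<not> ?P x}"
  have fin: "finite A" using Node.prems finite_cube finite_subset by blast
  have A2eq: "?A2 = {x\<in>A. (\<Prod>i\<in>S. x i) = 1}" using chi_val[of _ n S] Node.prems(1) by force
  have sub: "?A1 \<subseteq> cube n" "?A2 \<subseteq> cube n" using Node.prems by auto
  have tcl1: "tcl ?A1" using Node.prems(2) unfolding tcl_def by (auto simp: chi_mul3)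
  have tcl2: "tcl ?A2" using Node.prems(2) unfolding A2eq unfolding tcl_def by (auto simp: chi_mul3)
  have cardA: "card A = card ?A1 + card ?A2" by (rule card_split[OF fin])
  have le12: "card ?A2 \<le> card ?A1" if "?A1 \<noteq> {}"
    unfolding A2eq by (rule half_card[OF Node.prems(1,2)]) (use that in auto)
  have le21: "card ?A1 \<le> card ?A2" if "?A2 \<noteq> {}"
    using that unfolding A2eq by (intro half_card[OF Node.prems(1,2)]) auto
  have cd1: "?A1 = {} \<or> 2^n \<le> card ?A1 * 2^(Suc r)"
  proof (cases "?A1 = {}")
    case False
    hence "A \<noteq> {}" by auto
    hence "2^n \<le> card A * 2^r" using Node.prems(3) by auto
    also have "\<dots> \<le> card ?A1 * 2^(Suc r)" using cardA le12[OF False] by simp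
    finally show ?thesis by simp
  qed simp
  have cd2: "?A2 = {} \<or> 2^n \<le> card ?A2 * 2^(Suc r)"
  proof (cases "?A2 = {}")
    case False
    hence "A \<noteq> {}" by auto
    hence "2^n \<le> card A * 2^r" using Node.prems(3) by auto
    also have "\<dots> \<le> card ?A2 * 2^(Suc r)" using cardA le21[OF False] by simp
    finally show ?thesis by simp
  qed simp
  define D where "D = real (pdt_depth (Node S tn tp))"
  have ih1: "V n tn ?A1 \<le> (\<Sum>x\<in>?A1. (L n x)^2) - real (card ?A1) * (real n - 2 * (real r + D))"
  proof -
    have "V n tn ?A1 \<le> (\<Sum>x\<in>?A1. (L n x)^2) - real (card ?A1) * (real n - 2 * (real (Suc r) + real (pdt_depth tn)))"
      by (rule Node.IH(1)[OF sub(1) tcl1 cd1])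
    moreover have "real (card ?A1) * (real n - 2 * (real r + D)) \<le> real (card ?A1) * (real n - 2 * (real (Suc r) + real (pdt_depth tn)))"
      by (rule mult_left_mono) (auto simp: D_def)
    ultimately show ?thesis by linarith
  qed
  have ih2: "V n tp ?A2 \<le> (\<Sum>x\<in>?A2. (L n x)^2) - real (card ?A2) * (real n - 2 * (real r + D))"
  proof -
    have "V n tp ?A2 \<le> (\<Sum>x\<in>?A2. (L n x)^2) - real (card ?A2) * (real n - 2 * (real (Suc r) + real (pdt_depth tp)))"
      by (rule Node.IH(2)[OF sub(2) tcl2 cd2])
    moreover have "real (card ?A2) * (real n - 2 * (real r + D)) \<le> real (card ?A2) * (real n - 2 * (real (Suc r) + real (pdt_depth tp)))"
      by (rule mult_left_mono) (auto simp: D_def)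
    ultimately show ?thesis by linarith
  qed
  have "(\<Sum>x\<in>A. (L n x)^2) = (\<Sum>x\<in>?A1. (L n x)^2) + (\<Sum>x\<in>?A2. (L n x)^2)"
    by (rule sum_split[OF fin])
  thus ?case using ih1 ih2 cardA unfolding D_def[symmetric] by (simp add: algebra_simps)
qed

lemma ln2_ge: "ln (2::real) \<ge> 1/2"
proof -
  have "exp (1::real) \<le> 4" using exp_le by simp
  hence "ln (exp 1) \<le> ln (4::real)" by (subst ln_le_cancel_iff) auto
  hence "1 \<le> ln (4::real)" by simp
  also have "ln (4::real) = ln 2 + ln 2" using ln_mult[of "2::real" 2] by simp
  finally show ?thesis by simp
qed

theorem theorem1:
  fixes n d :: nat and f :: "(nat \<Rightarrow> real) \<Rightarrow> real" and t :: pdt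
  assumes "\<forall>x\<in>cube n. f x = -1 \<or> f x = 1"
    and "pdt_computes n t f" and "pdt_depth t = d"
  shows "(\<Sum>i<n. fourier n f {i})
     \<le> sqrt (4 * ln 2 * (4 * cprob n (\<lambda>x. f x = 1) * cprob n (\<lambda>x. f x = -1)) * real d)"
proof -
  define N where "N = real (card (cube n))"
  have N: "N = 2^n" by (simp add: N_def card_cube)
  have Npos: "N > 0" using N by simp
  have fin: "finite (cube n)" by (rule finite_cube)
  have fv: "f x = -1 \<or> f x = 1" if "x \<in> cube n" for x using assms(1) that by auto
  have ev: "pdt_eval t x = f x" if "x \<in> cube n" for x using assms(2) that by (auto simp: pdt_computes_def)
  define \<mu> where "\<mu> = cexp n f"
  define S where "S = (\<Sum>x\<in>cube n. f x * L n x)"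
  have F1: "(\<Sum>i<n. fourier n f {i}) = S / N"
  proof -
    have "(\<Sum>i<n. fourier n f {i}) = (\<Sum>i<n. (\<Sum>x\<in>cube n. f x * x i) / N)"
      by (simp add: fourier_def cexp_def N_def)
    also have "\<dots> = (\<Sum>i<n. \<Sum>x\<in>cube n. f x * x i) / N" by (simp add: sum_divide_distrib)
    also have "(\<Sum>i<n. \<Sum>x\<in>cube n. f x * x i) = (\<Sum>x\<in>cube n. \<Sum>i<n. f x * x i)" by (rule sum.swap)
    also have "\<dots> = S" by (simp add: S_def L_def sum_distrib_left)
    finally show ?thesis .
  qed
  have sL: "(\<Sum>x\<in>cube n. L n x) = 0" using sum_L by blast
  have sL2: "(\<Sum>x\<in>cube n. (L n x)^2) = real n * N" using sum_L N by simp
  have F2: "(\<Sum>x\<in>cube n. (pdt_eval t x - \<mu>) * L n x) = S"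
  proof -
    have "(\<Sum>x\<in>cube n. (pdt_eval t x - \<mu>) * L n x) = (\<Sum>x\<in>cube n. f x * L n x - \<mu> * L n x)"
      by (rule sum.cong) (auto simp: ev algebra_simps)
    also have "\<dots> = S - \<mu> * (\<Sum>x\<in>cube n. L n x)" by (simp add: S_def sum_subtractf sum_distrib_left)
    finally show ?thesis using sL by simp
  qed
  define Np where "Np = real (card {x\<in>cube n. f x = 1})"
  define Nq where "Nq = real (card {x\<in>cube n. f x = -1})"
  have split: "{x\<in>cube n. \<not> f x = 1} = {x\<in>cube n. f x = -1}" using fv by force
  have NpNq: "Np + Nq = N"
    using card_split[OF fin, of "\<lambda>x. f x = 1"] unfolding split Np_def Nq_def N_def by simp
  have sumf: "(\<Sum>x\<in>cube n. g (f x)) = Np * g 1 + Nq * g (-1)" for g :: "real \<Rightarrow> real"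
  proof -
    have "(\<Sum>x\<in>cube n. g (f x)) = (\<Sum>x\<in>{x\<in>cube n. f x = 1}. g (f x)) + (\<Sum>x\<in>{x\<in>cube n. f x = -1}. g (f x))"
      using sum_split[OF fin, of "\<lambda>x. g (f x)" "\<lambda>x. f x = 1"] unfolding split .
    also have "(\<Sum>x\<in>{x\<in>cube n. f x = 1}. g (f x)) = Np * g 1"
      by (simp add: Np_def)
    also have "(\<Sum>x\<in>{x\<in>cube n. f x = -1}. g (f x)) = Nq * g (-1)"
      by (simp add: Nq_def)
    finally show ?thesis .
  qed
  have mu: "\<mu> = (Np - Nq) / N"
    using sumf[of "\<lambda>y. y"] by (simp add: \<mu>_def cexp_def N_def)
  have p: "cprob n (\<lambda>x. f x = 1) = Np / N" by (simp add: cprob_def Np_def N_def)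
  have q: "cprob n (\<lambda>x. f x = -1) = Nq / N" by (simp add: cprob_def Nq_def N_def)
  define \<sigma> where "\<sigma> = 4 * (Np / N) * (Nq / N)"
  have sig0: "\<sigma> \<ge> 0" by (simp add: \<sigma>_def Np_def Nq_def N_def)
  have F3: "(\<Sum>x\<in>cube n. (pdt_eval t x - \<mu>)^2) = N * \<sigma>"
  proof -
    have "(\<Sum>x\<in>cube n. (pdt_eval t x - \<mu>)^2) = (\<Sum>x\<in>cube n. (f x - \<mu>)^2)"
      by (rule sum.cong) (auto simp: ev)
    also have "\<dots> = Np * (1 - \<mu>)^2 + Nq * (-1 - \<mu>)^2" by (rule sumf)
    also have "\<dots> = N * \<sigma>"
      unfolding mu \<sigma>_def using Npos NpNq[symmetric]
      by (simp add: field_simps power2_eq_square) (simp add: add_divide_distrib)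
    finally show ?thesis .
  qed
  have CS: "S^2 \<le> (N * \<sigma>) * V n t (cube n)"
    using V_cs[OF fin, of t \<mu> n] unfolding F2 F3 .
  have VB: "V n t (cube n) \<le> N * (2 * real d)"
  proof -
    have "V n t (cube n) \<le> (\<Sum>x\<in>cube n. (L n x)^2) - real (card (cube n)) * (real n - 2 * (real 0 + real (pdt_depth t)))"
      by (rule V_bound) (auto simp: tcl_cube card_cube)
    thus ?thesis unfolding sL2 N_def[symmetric] assms(3) by (simp add: algebra_simps)
  qed
  have "S^2 \<le> (N * \<sigma>) * (N * (2 * real d))"
    using CS VB mult_left_mono[OF VB, of "N * \<sigma>"] Npos sig0 by (meson order_trans mult_nonneg_nonneg less_imp_le)
  hence "S^2 \<le> N^2 * (\<sigma> * (2 * real d))" by (simp add: power2_eq_square algebra_simps)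
  hence "sqrt (S^2) \<le> sqrt (N^2 * (\<sigma> * (2 * real d)))" by (rule real_sqrt_le_mono)
  hence "\<bar>S\<bar> \<le> N * sqrt (\<sigma> * (2 * real d))" using Npos by (simp add: real_sqrt_mult)
  hence "S / N \<le> sqrt (\<sigma> * (2 * real d))" using Npos by (simp add: divide_le_eq abs_le_iff mult.commute)
  also have "\<dots> \<le> sqrt (4 * ln 2 * \<sigma> * real d)"
  proof (rule real_sqrt_le_mono)
    have "2 \<le> 4 * ln (2::real)" using ln2_ge by simp
    hence "2 * (\<sigma> * real d) \<le> (4 * ln 2) * (\<sigma> * real d)"
      by (rule mult_right_mono) (use sig0 in simp)
    thus "\<sigma> * (2 * real d) \<le> 4 * ln 2 * \<sigma> * real d" by (simp add: algebra_simps)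
  qed
  finally show ?thesis unfolding F1 p q \<sigma>_def by (simp add: mult.assoc)
qed

end
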